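(* $S$ is antimultiplicative, that is $S(ab)=S(b)S(a)$ for all $a,b\in A$.
   Context: Let $A$ be an associative algebra over a field $k$ (possibly without identity) with non-degenerate product, multiplier algebra $M(A)$ and left multipliers $L(A)$. Let $\Delta:A\to M(A\otimes A)$ be an algebra homomorphism (not necessarily coassociative) with Galois maps $T_{1}(a\otimes b)=\Delta(a)(1\otimes b)$ and $T_{2}(a\otimes b)=(a\otimes 1)\Delta(b)$ lying in $A\otimes A$, and $\varepsilon:A\to k$ linear with $(\varepsilon\otimes\iota)T_{1}(a\otimes b)=ab=(\iota\otimes\varepsilon)T_{2}(a\otimes b)$. Suppose $T_{1},T_{2}$ are bijective, $T_{1}^{-1}=(\iota\otimes\varepsilon\otimes\iota)(\iota\otimes T_{1}^{-1})(\Delta\otimes\iota)$ (left $A$-colinear) and $T_{2}^{-1}=(\iota\otimes\varepsilon\otimes\iota)(T_{2}^{-1}\otimes\iota)(\iota\otimes\Delta)$ (right $A$-colinear); i.e. $(A,\Delta)$ is a generalized multiplier Hopf coquasigroup. The map $S:A\to L(A)$ is defined by $S(a)b=(\varepsilon\otimes\iota)T_{1}^{-1}(a\otimes b)$. *)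

theory Defs
  imports Main "HOL.Vector_Spaces"
begin

text \<open>
  The algebra A is a type 'a of
  class ring (associative, distributive, NO identity required) together with a scalar
  multiplication scale making it a k-vector space, the product being k-bilinear.

  An element of A (x) A is represented by a finite list of pairs
  [(a1,b1),...,(an,bn)] standing for the sum of the ai (x) bi; two lists represent
  the same tensor iff they agree under every functional f (x) g with f, g linear
  functionals on A (this is exactly equality in A (x) A, vector spaces over a field).
\<close>

definition lin_fun :: "('k::field \<Rightarrow> 'a::ab_group_add \<Rightarrow> 'a) \<Rightarrow> ('a \<Rightarrow> 'k) \<Rightarrow> bool" where
  "lin_fun scale f \<longleftrightarrow> (\<forall>x y. f (x + y) = f x + f y) \<and> (\<forall>c x. f (scale c x) = c * f x)"

definition k_algebra :: "('k::field \<Rightarrow> 'a::ring \<Rightarrow> 'a) \<Rightarrow> bool" where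
  "k_algebra scale \<longleftrightarrow> vector_space scale \<and>
     (\<forall>c x y. scale c (x * y) = scale c x * y \<and> scale c (x * y) = x * scale c y)"

definition nondegenerate :: "'a::ring itself \<Rightarrow> bool" where
  "nondegenerate _ \<longleftrightarrow> (\<forall>a::'a. (\<forall>b. a * b = 0) \<longrightarrow> a = 0) \<and> (\<forall>a::'a. (\<forall>b. b * a = 0) \<longrightarrow> a = 0)"

type_synonym 'a ten = "('a \<times> 'a) list"
type_synonym 'a ten3 = "('a \<times> 'a \<times> 'a) list"

definition teq :: "('k::field \<Rightarrow> 'a::ab_group_add \<Rightarrow> 'a) \<Rightarrow> 'a ten \<Rightarrow> 'a ten \<Rightarrow> bool" where
  "teq scale t u \<longleftrightarrow> (\<forall>f g. lin_fun scale f \<longrightarrow> lin_fun scale g \<longrightarrow>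
      sum_list (map (\<lambda>(x,y). f x * g y) t) = sum_list (map (\<lambda>(x,y). f x * g y) u))"

definition teq3 :: "('k::field \<Rightarrow> 'a::ab_group_add \<Rightarrow> 'a) \<Rightarrow> 'a ten3 \<Rightarrow> 'a ten3 \<Rightarrow> bool" where
  "teq3 scale t u \<longleftrightarrow> (\<forall>f g h. lin_fun scale f \<longrightarrow> lin_fun scale g \<longrightarrow> lin_fun scale h \<longrightarrow>
      sum_list (map (\<lambda>(x,y,z). f x * g y * h z) t) = sum_list (map (\<lambda>(x,y,z). f x * g y * h z) u))"

definition tmul :: "'a::ring ten \<Rightarrow> 'a ten \<Rightarrow> 'a ten" where
  "tmul t u = concat (map (\<lambda>(a,b). map (\<lambda>(c,d). (a * c, b * d)) u) t)"

definition tscale :: "('k \<Rightarrow> 'a \<Rightarrow> 'a) \<Rightarrow> 'k \<Rightarrow> 'a ten \<Rightarrow> 'a ten" where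
  "tscale scale c t = map (\<lambda>(a,b). (scale c a, b)) t"

text \<open>Multipliers of A (x) A: pairs (l, r) of maps (left and right action).\<close>
type_synonym 'a mult = "('a ten \<Rightarrow> 'a ten) \<times> ('a ten \<Rightarrow> 'a ten)"

definition tlinear :: "('k::field \<Rightarrow> 'a::ring \<Rightarrow> 'a) \<Rightarrow> ('a ten \<Rightarrow> 'a ten) \<Rightarrow> bool" where
  "tlinear scale F \<longleftrightarrow> (\<forall>t u. teq scale t u \<longrightarrow> teq scale (F t) (F u)) \<and>
     (\<forall>t u. teq scale (F (t @ u)) (F t @ F u)) \<and>
     (\<forall>c t. teq scale (F (tscale scale c t)) (tscale scale c (F t)))"

definition is_mult :: "('k::field \<Rightarrow> 'a::ring \<Rightarrow> 'a) \<Rightarrow> 'a mult \<Rightarrow> bool" where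
  "is_mult scale m \<longleftrightarrow> tlinear scale (fst m) \<and> tlinear scale (snd m) \<and>
     (\<forall>x y. teq scale (tmul x (fst m y)) (tmul (snd m x) y))"

definition meq :: "('k::field \<Rightarrow> 'a::ring \<Rightarrow> 'a) \<Rightarrow> 'a mult \<Rightarrow> 'a mult \<Rightarrow> bool" where
  "meq scale m n \<longleftrightarrow> (\<forall>y. teq scale (fst m y) (fst n y) \<and> teq scale (snd m y) (snd n y))"

definition madd :: "'a mult \<Rightarrow> 'a mult \<Rightarrow> 'a mult" where
  "madd m n = ((\<lambda>y. fst m y @ fst n y), (\<lambda>y. snd m y @ snd n y))"

definition mscale :: "('k \<Rightarrow> 'a \<Rightarrow> 'a) \<Rightarrow> 'k \<Rightarrow> 'a mult \<Rightarrow> 'a mult" where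
  "mscale scale c m = ((\<lambda>y. tscale scale c (fst m y)), (\<lambda>y. tscale scale c (snd m y)))"

definition mmul :: "'a mult \<Rightarrow> 'a mult \<Rightarrow> 'a mult" where
  "mmul m n = (fst m \<circ> fst n, snd n \<circ> snd m)"

definition memb :: "'a::ring ten \<Rightarrow> 'a mult" where
  "memb x = ((\<lambda>y. tmul x y), (\<lambda>y. tmul y x))"

definition one_ten :: "'a::ring \<Rightarrow> 'a mult" where
  "one_ten b = ((\<lambda>y. map (\<lambda>(p,q). (p, b * q)) y), (\<lambda>y. map (\<lambda>(p,q). (p, q * b)) y))"

definition ten_one :: "'a::ring \<Rightarrow> 'a mult" where
  "ten_one a = ((\<lambda>y. map (\<lambda>(p,q). (a * p, q)) y), (\<lambda>y. map (\<lambda>(p,q). (p * a, q)) y))"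

definition alg_hom_mult :: "('k::field \<Rightarrow> 'a::ring \<Rightarrow> 'a) \<Rightarrow> ('a \<Rightarrow> 'a mult) \<Rightarrow> bool" where
  "alg_hom_mult scale \<Delta> \<longleftrightarrow> (\<forall>a. is_mult scale (\<Delta> a)) \<and>
     (\<forall>a b. meq scale (\<Delta> (a + b)) (madd (\<Delta> a) (\<Delta> b))) \<and>
     (\<forall>c a. meq scale (\<Delta> (scale c a)) (mscale scale c (\<Delta> a))) \<and>
     (\<forall>a b. meq scale (\<Delta> (a * b)) (mmul (\<Delta> a) (\<Delta> b)))"

definition lin_ext :: "('a \<Rightarrow> 'a \<Rightarrow> 'a ten) \<Rightarrow> 'a ten \<Rightarrow> 'a ten" where
  "lin_ext F t = concat (map (\<lambda>(a,b). F a b) t)"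

definition tbij :: "('k::field \<Rightarrow> 'a::ab_group_add \<Rightarrow> 'a) \<Rightarrow> ('a ten \<Rightarrow> 'a ten) \<Rightarrow> bool" where
  "tbij scale F \<longleftrightarrow> (\<forall>t u. teq scale (F t) (F u) \<longrightarrow> teq scale t u) \<and> (\<forall>u. \<exists>t. teq scale (F t) u)"

definition tinv :: "('k::field \<Rightarrow> 'a::ab_group_add \<Rightarrow> 'a) \<Rightarrow> ('a ten \<Rightarrow> 'a ten) \<Rightarrow> 'a ten \<Rightarrow> 'a ten" where
  "tinv scale F u = (SOME t. teq scale (F t) u)"

definition eps_id :: "('k \<Rightarrow> 'a::monoid_add \<Rightarrow> 'a) \<Rightarrow> ('a \<Rightarrow> 'k) \<Rightarrow> 'a ten \<Rightarrow> 'a" where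
  "eps_id scale \<epsilon> t = sum_list (map (\<lambda>(p,q). scale (\<epsilon> p) q) t)"

definition id_eps :: "('k \<Rightarrow> 'a::monoid_add \<Rightarrow> 'a) \<Rightarrow> ('a \<Rightarrow> 'k) \<Rightarrow> 'a ten \<Rightarrow> 'a" where
  "id_eps scale \<epsilon> t = sum_list (map (\<lambda>(p,q). scale (\<epsilon> q) p) t)"

definition id_eps_id :: "('k \<Rightarrow> 'a \<Rightarrow> 'a) \<Rightarrow> ('a \<Rightarrow> 'k) \<Rightarrow> 'a ten3 \<Rightarrow> 'a ten" where
  "id_eps_id scale \<epsilon> w = map (\<lambda>(x,y,z). (scale (\<epsilon> y) x, z)) w"

definition id_ten :: "('a ten \<Rightarrow> 'a ten) \<Rightarrow> 'a ten3 \<Rightarrow> 'a ten3" where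
  "id_ten F w = concat (map (\<lambda>(x,y,z). map (\<lambda>(p,q). (x,p,q)) (F [(y,z)])) w)"

definition ten_id :: "('a ten \<Rightarrow> 'a ten) \<Rightarrow> 'a ten3 \<Rightarrow> 'a ten3" where
  "ten_id F w = concat (map (\<lambda>(x,y,z). map (\<lambda>(p,q). (p,q,z)) (F [(x,y)])) w)"

text \<open>
  Galois maps: T1(a (x) b) = Delta(a)(1 (x) b) and T2(a (x) b) = (a (x) 1)Delta(b) lie in
  A (x) A; t1 a b and t2 a b are representatives of these elements.
\<close>
definition galois_maps :: "('k::field \<Rightarrow> 'a::ring \<Rightarrow> 'a) \<Rightarrow> ('a \<Rightarrow> 'a mult) \<Rightarrow>
    ('a \<Rightarrow> 'a \<Rightarrow> 'a ten) \<Rightarrow> ('a \<Rightarrow> 'a \<Rightarrow> 'a ten) \<Rightarrow> bool" where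
  "galois_maps scale \<Delta> t1 t2 \<longleftrightarrow>
     (\<forall>a b. meq scale (memb (t1 a b)) (mmul (\<Delta> a) (one_ten b))) \<and>
     (\<forall>a b. meq scale (memb (t2 a b)) (mmul (ten_one a) (\<Delta> b)))"

text \<open>
  Left A-colinearity of T1^{-1}: T1^{-1} = (iota (x) eps (x) iota)(iota (x) T1^{-1})(Delta (x) iota),
  read after covering the first leg by c (x) 1 (x) 1 : (c (x) 1 (x) 1)(Delta(a) (x) b) = T2(c (x) a) (x) b.
  Right A-colinearity of T2^{-1}: T2^{-1} = (iota (x) eps (x) iota)(T2^{-1} (x) iota)(iota (x) Delta),
  read after covering the last leg by 1 (x) 1 (x) c : (a (x) Delta(b))(1 (x) 1 (x) c) = a (x) T1(b (x) c).
\<close>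
definition left_colinear :: "('k::field \<Rightarrow> 'a::ring \<Rightarrow> 'a) \<Rightarrow> ('a \<Rightarrow> 'k) \<Rightarrow>
    ('a \<Rightarrow> 'a \<Rightarrow> 'a ten) \<Rightarrow> ('a \<Rightarrow> 'a \<Rightarrow> 'a ten) \<Rightarrow> bool" where
  "left_colinear scale \<epsilon> t1 t2 \<longleftrightarrow> (\<forall>a b c.
     teq scale (map (\<lambda>(p,q). (c * p, q)) (tinv scale (lin_ext t1) [(a,b)]))
       (id_eps_id scale \<epsilon> (id_ten (tinv scale (lin_ext t1)) (map (\<lambda>(p,q). (p,q,b)) (t2 c a)))))"

definition right_colinear :: "('k::field \<Rightarrow> 'a::ring \<Rightarrow> 'a) \<Rightarrow> ('a \<Rightarrow> 'k) \<Rightarrow>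
    ('a \<Rightarrow> 'a \<Rightarrow> 'a ten) \<Rightarrow> ('a \<Rightarrow> 'a \<Rightarrow> 'a ten) \<Rightarrow> bool" where
  "right_colinear scale \<epsilon> t1 t2 \<longleftrightarrow> (\<forall>a b c.
     teq scale (map (\<lambda>(p,q). (p, q * c)) (tinv scale (lin_ext t2) [(a,b)]))
       (id_eps_id scale \<epsilon> (ten_id (tinv scale (lin_ext t2)) (map (\<lambda>(p,q). (a,p,q)) (t1 b c)))))"

text \<open>The antipode S : A \<rightarrow> L(A), S(a)b = (eps (x) iota)T1^{-1}(a (x) b), as a map A \<rightarrow> (A \<Rightarrow> A).\<close>
definition antipode :: "('k::field \<Rightarrow> 'a::ring \<Rightarrow> 'a) \<Rightarrow> ('a \<Rightarrow> 'k) \<Rightarrow>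
    ('a \<Rightarrow> 'a \<Rightarrow> 'a ten) \<Rightarrow> 'a \<Rightarrow> 'a \<Rightarrow> 'a" where
  "antipode scale \<epsilon> t1 a b = eps_id scale \<epsilon> (tinv scale (lin_ext t1) [(a,b)])"

end

theory Submission
  imports Defs
begin

lemma vs_field: "vector_space ((*) :: 'k::field \<Rightarrow> 'k \<Rightarrow> 'k)"
  by unfold_locales (auto simp: algebra_simps)

lemma sep:
  fixes scale :: "'k::field \<Rightarrow> 'a::ab_group_add \<Rightarrow> 'a"
  assumes vs: "vector_space scale" and h: "\<And>g. lin_fun scale g \<Longrightarrow> g x = g y"
  shows "x = y"
proof (rule ccontr)
  assume ne: "x \<noteq> y"
  interpret vp: vector_space_pair scale "(*) :: 'k \<Rightarrow> 'k \<Rightarrow> 'k"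
    using vs vs_field by (simp add: vector_space_pair_def)
  have "vp.vs1.independent {x - y}" using ne by simp
  from vp.linear_independent_extend[OF this, of "\<lambda>_. 1"]
  obtain g where g: "Vector_Spaces.linear scale (*) g" "g (x - y) = 1" by auto
  interpret lg: Vector_Spaces.linear scale "(*) :: 'k \<Rightarrow> 'k \<Rightarrow> 'k" g by (rule g(1))
  have "lin_fun scale g" unfolding lin_fun_def using lg.add lg.scale by simp
  hence "g x = g y" by (rule h)
  moreover have "g (x - y) = g x - g y" by (rule lg.diff)
  ultimately show False using g(2) by simp
qed

definition pr :: "('a \<Rightarrow> 'k::field) \<Rightarrow> ('a \<Rightarrow> 'k) \<Rightarrow> ('a \<times> 'a) list \<Rightarrow> 'k" where
  "pr f g t = sum_list (map (\<lambda>(x,y). f x * g y) t)"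

lemma pr_simps[simp]: "pr f g [] = 0" "pr f g ((x,y)#t) = f x * g y + pr f g t"
  "pr f g (t @ u) = pr f g t + pr f g u"
  by (simp_all add: pr_def)

lemma pr_concat: "pr f g (concat L) = sum_list (map (pr f g) L)"
  by (induct L) auto

lemma teq_pr: "teq scale t u \<longleftrightarrow> (\<forall>f g. lin_fun scale f \<longrightarrow> lin_fun scale g \<longrightarrow> pr f g t = pr f g u)"
  unfolding teq_def pr_def ..

lemma teq_refl[simp]: "teq scale t t" by (simp add: teq_pr)
lemma teq_sym: "teq scale t u \<Longrightarrow> teq scale u t" by (simp add: teq_pr)
lemma teq_trans[trans]: "teq scale t u \<Longrightarrow> teq scale u v \<Longrightarrow> teq scale t v" by (simp add: teq_pr)
lemma teq_append: "teq scale a a' \<Longrightarrow> teq scale b b' \<Longrightarrow> teq scale (a @ b) (a' @ b')"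
  by (simp add: teq_pr)
lemma teq_concat_map: "(\<And>x. x \<in> set L \<Longrightarrow> teq scale (F x) (G x)) \<Longrightarrow>
   teq scale (concat (map F L)) (concat (map G L))"
  by (induct L) (auto simp: teq_pr)

lemma lin_fun_0: "lin_fun scale h \<Longrightarrow> h 0 = 0"
  unfolding lin_fun_def by (metis add_cancel_right_right add_0)

lemma lin_fun_sum: "lin_fun scale h \<Longrightarrow> h (sum_list (map F L)) = sum_list (map (\<lambda>x. h (F x)) L)"
  by (induct L) (auto simp: lin_fun_0 lin_fun_def)

lemma lin_fun_scale: "lin_fun scale h \<Longrightarrow> h (scale c x) = c * h x"
  by (simp add: lin_fun_def)

lemma lin_fun_add: "lin_fun scale h \<Longrightarrow> h (x + y) = h x + h y"
  by (simp add: lin_fun_def)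

lemma sum_list_mult_right: "(sum_list (map F L) :: 'a::ring) * d = sum_list (map (\<lambda>x. F x * d) L)"
  by (induct L) (auto simp: distrib_right)

lemma sum_list_mult_left: "d * (sum_list (map F L) :: 'a::ring) = sum_list (map (\<lambda>x. d * F x) L)"
  by (induct L) (auto simp: distrib_left)

locale kalg =
  fixes scale :: "'k::field \<Rightarrow> 'a::ring \<Rightarrow> 'a"
  assumes alg: "k_algebra scale"
begin

lemma vs: "vector_space scale" using alg by (simp add: k_algebra_def)

lemma sc_ml: "scale c (x * y) = scale c x * y" using alg by (simp add: k_algebra_def)
lemma sc_mr: "scale c (x * y) = x * scale c y" using alg unfolding k_algebra_def by blast

lemma lin_mr: "lin_fun scale f \<Longrightarrow> lin_fun scale (\<lambda>x. f (x * c))"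
  unfolding lin_fun_def by (auto simp: distrib_right sc_ml[symmetric])
lemma lin_ml: "lin_fun scale f \<Longrightarrow> lin_fun scale (\<lambda>x. f (c * x))"
  unfolding lin_fun_def by (auto simp: distrib_left sc_mr[symmetric])

lemma sepa: "(\<And>g. lin_fun scale g \<Longrightarrow> g x = g y) \<Longrightarrow> x = y"
  using sep[OF vs] by blast

lemma pr_map: "pr f g (map (\<lambda>(p,q). (\<phi> p, \<psi> q)) v) = pr (\<lambda>x. f (\<phi> x)) (\<lambda>y. g (\<psi> y)) v"
  by (induct v) auto

lemma tmul_cons: "tmul ((a,b)#t) v = map (\<lambda>(c,d). (a*c, b*d)) v @ tmul t v"
  by (simp add: tmul_def)
lemma tmul_nil[simp]: "tmul [] v = []" by (simp add: tmul_def)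
lemma tmul_append: "tmul (t @ u) v = tmul t v @ tmul u v" by (simp add: tmul_def)

lemma pr_tmul_r: "pr f g (tmul t v) = sum_list (map (\<lambda>(a,b). pr (\<lambda>x. f (a*x)) (\<lambda>y. g (b*y)) v) t)"
proof (induct t)
  case (Cons p t)
  obtain a b where p: "p = (a,b)" by force
  have "pr f g (map (\<lambda>(c,d). (a*c, b*d)) v) = pr (\<lambda>x. f (a*x)) (\<lambda>y. g (b*y)) v"
    by (induct v) auto
  then show ?case using Cons by (simp add: p tmul_cons)
qed simp

lemma pr_tmul_l: "pr f g (tmul t v) = sum_list (map (\<lambda>(c,d). pr (\<lambda>x. f (x*c)) (\<lambda>y. g (y*d)) t) v)"
proof (induct t)
  case Nil then show ?case by (induct v) auto
next
  case (Cons p t)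
  obtain a b where p: "p = (a,b)" by force
  have "pr f g (map (\<lambda>(c,d). (a*c, b*d)) v) = sum_list (map (\<lambda>(c,d). f (a*c) * g (b*d)) v)"
    by (induct v) auto
  then show ?case using Cons by (simp add: p tmul_cons sum_list_addf[symmetric] case_prod_beta)
qed

lemma teq_tmul_l: "teq scale t t' \<Longrightarrow> teq scale (tmul t v) (tmul t' v)"
  unfolding teq_pr pr_tmul_l by (auto intro!: arg_cong[where f=sum_list] map_cong simp: lin_mr)

lemma teq_tmul_r: "teq scale v v' \<Longrightarrow> teq scale (tmul t v) (tmul t v')"
  unfolding teq_pr pr_tmul_r by (auto intro!: arg_cong[where f=sum_list] map_cong simp: lin_ml)

lemma pr_as: "lin_fun scale h \<Longrightarrow> h (sum_list (map (\<lambda>(x,y). scale (\<phi> x) (\<psi> y)) t)) = pr \<phi> (\<lambda>y. h (\<psi> y)) t"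
  by (induct t) (auto simp: lin_fun_0 lin_fun_add lin_fun_scale)

lemma pr_as2: "lin_fun scale h \<Longrightarrow> h (sum_list (map (\<lambda>(x,y). scale (\<phi> y) (\<psi> x)) t)) = pr (\<lambda>x. h (\<psi> x)) \<phi> t"
  by (induct t) (auto simp: lin_fun_0 lin_fun_add lin_fun_scale mult.commute)

lemma sl_mr: "sum_list (map (\<lambda>(x,y). scale (\<phi> x y) (\<psi> x y)) t) * d = sum_list (map (\<lambda>(x,y). scale (\<phi> x y) (\<psi> x y * d)) t)"
  by (induct t) (auto simp: distrib_right sc_ml)
lemma sl_ml: "d * sum_list (map (\<lambda>(x,y). scale (\<phi> x y) (\<psi> x y)) t) = sum_list (map (\<lambda>(x,y). scale (\<phi> x y) (d * \<psi> x y)) t)"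
  by (induct t) (auto simp: distrib_left sc_mr)

lemma nd_r:
  assumes nd: "nondegenerate TYPE('a)" and h: "\<And>v. teq scale (tmul t v) (tmul t' v)"
  shows "teq scale t t'"
proof -
  have cancel: "u = w" if "\<And>d. u * d = w * d" for u w :: 'a
  proof -
    have "\<forall>b. (u - w) * b = 0" using that by (simp add: left_diff_distrib)
    then have "u - w = 0" using nd unfolding nondegenerate_def by blast
    then show ?thesis by simp
  qed
  have 1: "pr (\<lambda>x. f (x*c)) (\<lambda>y. g (y*d)) t = pr (\<lambda>x. f (x*c)) (\<lambda>y. g (y*d)) t'"
    if "lin_fun scale f" "lin_fun scale g" for f g c d
    using h[of "[(c,d)]"] that unfolding teq_pr pr_tmul_l by simp
  have 2: "pr (\<lambda>x. f (x*c)) g t = pr (\<lambda>x. f (x*c)) g t'"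
    if f: "lin_fun scale f" and g: "lin_fun scale g" for f g c
  proof -
    define Y where "Y = (\<lambda>t. sum_list (map (\<lambda>(x,y). scale (f (x*c)) y) t))"
    have "Y t = Y t'"
    proof (rule cancel, rule sepa)
      fix d and g' :: "'a \<Rightarrow> 'k" assume g': "lin_fun scale g'"
      have e: "g' (Y s * d) = pr (\<lambda>x. f (x*c)) (\<lambda>y. g' (y*d)) s" for s
        unfolding Y_def sl_mr[where \<phi>="\<lambda>x y. f (x*c)" and \<psi>="\<lambda>x y. y", simplified]
        by (rule pr_as[OF g', where \<phi>="\<lambda>x. f (x*c)" and \<psi>="\<lambda>y. y * d"])
      show "g' (Y t * d) = g' (Y t' * d)" unfolding e using 1[OF f g'] by simp
    qed
    moreover have "g (Y s) = pr (\<lambda>x. f (x*c)) g s" for s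
      unfolding Y_def using pr_as[OF g, where \<phi>="\<lambda>x. f (x*c)" and \<psi>="\<lambda>y. y"] by simp
    ultimately show ?thesis by metis
  qed
  show ?thesis unfolding teq_pr
  proof (intro allI impI)
    fix f g :: "'a \<Rightarrow> 'k" assume f: "lin_fun scale f" and g: "lin_fun scale g"
    define X where "X = (\<lambda>t. sum_list (map (\<lambda>(x,y). scale (g y) x) t))"
    have "X t = X t'"
    proof (rule cancel, rule sepa)
      fix c and f' :: "'a \<Rightarrow> 'k" assume f': "lin_fun scale f'"
      have e: "f' (X s * c) = pr (\<lambda>x. f' (x*c)) g s" for s
        unfolding X_def sl_mr[where \<phi>="\<lambda>x y. g y" and \<psi>="\<lambda>x y. x", simplified]
        by (rule pr_as2[OF f', where \<phi>=g and \<psi>="\<lambda>x. x * c"])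
      show "f' (X t * c) = f' (X t' * c)" unfolding e using 2[OF f' g] by simp
    qed
    moreover have "f (X s) = pr f g s" for s
      unfolding X_def using pr_as2[OF f, where \<phi>=g and \<psi>="\<lambda>y. y"] by simp
    ultimately show "pr f g t = pr f g t'" by metis
  qed
qed


lemma nd_l:
  assumes nd: "nondegenerate TYPE('a)" and h: "\<And>v. teq scale (tmul v t) (tmul v t')"
  shows "teq scale t t'"
proof -
  have cancel: "u = w" if "\<And>d. d * u = d * w" for u w :: 'a
  proof -
    have "\<forall>b. b * (u - w) = 0" using that by (simp add: right_diff_distrib)
    then have "u - w = 0" using nd unfolding nondegenerate_def by blast
    then show ?thesis by simp
  qed
  have 1: "pr (\<lambda>x. f (c*x)) (\<lambda>y. g (d*y)) t = pr (\<lambda>x. f (c*x)) (\<lambda>y. g (d*y)) t'"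
    if "lin_fun scale f" "lin_fun scale g" for f g c d
    using h[of "[(c,d)]"] that unfolding teq_pr pr_tmul_r by simp
  have 2: "pr (\<lambda>x. f (c*x)) g t = pr (\<lambda>x. f (c*x)) g t'"
    if f: "lin_fun scale f" and g: "lin_fun scale g" for f g c
  proof -
    define Y where "Y = (\<lambda>t. sum_list (map (\<lambda>(x,y). scale (f (c*x)) y) t))"
    have "Y t = Y t'"
    proof (rule cancel, rule sepa)
      fix d and g' :: "'a \<Rightarrow> 'k" assume g': "lin_fun scale g'"
      have e: "g' (d * Y s) = pr (\<lambda>x. f (c*x)) (\<lambda>y. g' (d*y)) s" for s
        unfolding Y_def sl_ml[where \<phi>="\<lambda>x y. f (c*x)" and \<psi>="\<lambda>x y. y", simplified]
        by (rule pr_as[OF g', where \<phi>="\<lambda>x. f (c*x)" and \<psi>="\<lambda>y. d * y"])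
      show "g' (d * Y t) = g' (d * Y t')" unfolding e using 1[OF f g'] by simp
    qed
    moreover have "g (Y s) = pr (\<lambda>x. f (c*x)) g s" for s
      unfolding Y_def using pr_as[OF g, where \<phi>="\<lambda>x. f (c*x)" and \<psi>="\<lambda>y. y"] by simp
    ultimately show ?thesis by metis
  qed
  show ?thesis unfolding teq_pr
  proof (intro allI impI)
    fix f g :: "'a \<Rightarrow> 'k" assume f: "lin_fun scale f" and g: "lin_fun scale g"
    define X where "X = (\<lambda>t. sum_list (map (\<lambda>(x,y). scale (g y) x) t))"
    have "X t = X t'"
    proof (rule cancel, rule sepa)
      fix c and f' :: "'a \<Rightarrow> 'k" assume f': "lin_fun scale f'"
      have e: "f' (c * X s) = pr (\<lambda>x. f' (c*x)) g s" for s
        unfolding X_def sl_ml[where \<phi>="\<lambda>x y. g y" and \<psi>="\<lambda>x y. x", simplified]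
        by (rule pr_as2[OF f', where \<phi>=g and \<psi>="\<lambda>x. c * x"])
      show "f' (c * X t) = f' (c * X t')" unfolding e using 2[OF f' g] by simp
    qed
    moreover have "f (X s) = pr f g s" for s
      unfolding X_def using pr_as2[OF f, where \<phi>=g and \<psi>="\<lambda>y. y"] by simp
    ultimately show "pr f g t = pr f g t'" by metis
  qed
qed


lemma md: "module scale" using vs by (simp add: module_iff_vector_space)

lemma vsc: "scale a (scale b x) = scale (a * b) x" "scale (a + b) x = scale a x + scale b x"
  "scale a (x + y) = scale a x + scale a y" "scale 0 x = 0" "scale a 0 = 0" "scale 1 x = x"
  using module.scale_scale[OF md] module.scale_left_distrib[OF md]
    module.scale_right_distrib[OF md] module.scale_zero_left[OF md]
    module.scale_zero_right[OF md] module.scale_one[OF md] by blast+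

lemma teq_map_gen:
  assumes "\<And>f. lin_fun scale f \<Longrightarrow> lin_fun scale (\<lambda>x. f (\<phi> x))"
    and "\<And>g. lin_fun scale g \<Longrightarrow> lin_fun scale (\<lambda>x. g (\<psi> x))"
    and "teq scale t u"
  shows "teq scale (map (\<lambda>(p,q). (\<phi> p, \<psi> q)) t) (map (\<lambda>(p,q). (\<phi> p, \<psi> q)) u)"
  using assms unfolding teq_pr pr_map by blast

lemma lin_id: "lin_fun scale f \<Longrightarrow> lin_fun scale (\<lambda>x. f x)" by simp

lemma lin_sc: "lin_fun scale f \<Longrightarrow> lin_fun scale (\<lambda>x. f (scale c x))"
  unfolding lin_fun_def by (auto simp: vsc mult.commute)

lemma teq_mapl: "teq scale t u \<Longrightarrow> teq scale (map (\<lambda>(p,q). (c*p, q)) t) (map (\<lambda>(p,q). (c*p, q)) u)"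
  using teq_map_gen[where \<phi>="\<lambda>p. c*p" and \<psi>="\<lambda>q. q"] lin_ml by blast
lemma teq_mapr: "teq scale t u \<Longrightarrow> teq scale (map (\<lambda>(p,q). (p*c, q)) t) (map (\<lambda>(p,q). (p*c, q)) u)"
  using teq_map_gen[where \<phi>="\<lambda>p. p*c" and \<psi>="\<lambda>q. q"] lin_mr by blast
lemma teq_tscale: "teq scale t u \<Longrightarrow> teq scale (tscale scale c t) (tscale scale c u)"
  unfolding tscale_def using teq_map_gen[where \<phi>="\<lambda>p. scale c p" and \<psi>="\<lambda>q. q"] lin_sc by blast

lemma eps_id_append[simp]: "eps_id scale e (t @ u) = eps_id scale e t + eps_id scale e u"
  by (simp add: eps_id_def)
lemma eps_id_cons[simp]: "eps_id scale e ((x,y) # u) = scale (e x) y + eps_id scale e u"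
  by (simp add: eps_id_def)
lemma eps_id_nil[simp]: "eps_id scale e [] = 0"
  by (simp add: eps_id_def)
lemma eps_id_concat: "eps_id scale e (concat L) = sum_list (map (eps_id scale e) L)"
  by (induct L) auto

lemma eps_id_pr: "lin_fun scale g \<Longrightarrow> g (eps_id scale e t) = pr e g t"
  by (induct t) (auto simp: lin_fun_0 lin_fun_add lin_fun_scale)

lemma eps_id_teq: "lin_fun scale e \<Longrightarrow> teq scale t u \<Longrightarrow> eps_id scale e t = eps_id scale e u"
  by (rule sepa) (simp add: eps_id_pr teq_pr)

lemma eps_id_tscale: "lin_fun scale e \<Longrightarrow> eps_id scale e (tscale scale c t) = scale c (eps_id scale e t)"
  by (induct t) (auto simp: tscale_def lin_fun_scale vsc mult.commute)

lemma eps_id_mr: "eps_id scale e t * y = eps_id scale e (map (\<lambda>(r,s). (r, s*y)) t)"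
  by (induct t) (auto simp: distrib_right sc_ml)

lemma tlin_teq: "tlinear scale F \<Longrightarrow> teq scale t u \<Longrightarrow> teq scale (F t) (F u)"
  unfolding tlinear_def by blast
lemma tlin_app: "tlinear scale F \<Longrightarrow> teq scale (F (t @ u)) (F t @ F u)"
  unfolding tlinear_def by blast
lemma tlin_nil: "tlinear scale F \<Longrightarrow> teq scale (F []) []"
proof -
  assume F: "tlinear scale F"
  have h: "teq scale (F ([] @ [])) (F [] @ F [])" by (rule tlin_app[OF F])
  show ?thesis unfolding teq_pr
  proof (intro allI impI)
    fix f g :: "'a \<Rightarrow> 'k" assume "lin_fun scale f" "lin_fun scale g"
    with h have "pr f g (F []) = pr f g (F [] @ F [])" unfolding teq_pr by simp
    then have "pr f g (F []) = pr f g (F []) + pr f g (F [])" by (simp only: pr_simps(3))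
    then show "pr f g (F []) = pr f g []" by (simp only: pr_simps(1)) (metis add_cancel_right_right)
  qed
qed

lemma tmul_map_l: "tmul (map (\<lambda>(c,d). (x*c, y*d)) b) c = map (\<lambda>(c,d). (x*c, y*d)) (tmul b c)"
  by (induct b) (auto simp: tmul_cons mult.assoc)

lemma tmul_assoc: "tmul (tmul a b) c = tmul a (tmul b c)"
  by (induct a) (auto simp: tmul_cons tmul_append tmul_map_l)

lemma mult_comm:
  assumes nd: "nondegenerate TYPE('a)" and m: "is_mult scale m"
  shows "teq scale (fst m (tmul u v)) (tmul (fst m u) v)"
proof (rule nd_l[OF nd])
  fix x
  have m1: "teq scale (tmul x (fst m y)) (tmul (snd m x) y)" for x y using m by (simp add: is_mult_def)
  have "teq scale (tmul x (fst m (tmul u v))) (tmul (snd m x) (tmul u v))" by (rule m1)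
  also have "tmul (snd m x) (tmul u v) = tmul (tmul (snd m x) u) v" by (simp add: tmul_assoc)
  also have "teq scale \<dots> (tmul (tmul x (fst m u)) v)" by (rule teq_tmul_l, rule teq_sym, rule m1)
  also have "\<dots> = tmul x (tmul (fst m u) v)" by (simp add: tmul_assoc)
  finally show "teq scale (tmul x (fst m (tmul u v))) (tmul x (tmul (fst m u) v))" .
qed

end


locale setting = kalg scale
  for scale :: "'k::field \<Rightarrow> 'a::ring \<Rightarrow> 'a" +
  fixes \<Delta> :: "'a \<Rightarrow> 'a mult"
    and \<epsilon> :: "'a \<Rightarrow> 'k"
    and t1 t2 :: "'a \<Rightarrow> 'a \<Rightarrow> 'a ten"
  assumes nondeg: "nondegenerate TYPE('a)"
    and hom: "alg_hom_mult scale \<Delta>"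
    and galois: "galois_maps scale \<Delta> t1 t2"
    and eps_lin: "lin_fun scale \<epsilon>"
    and counit1: "\<forall>a b. eps_id scale \<epsilon> (t1 a b) = a * b"
    and bij1: "tbij scale (lin_ext t1)"
    and lcol: "left_colinear scale \<epsilon> t1 t2"
begin

abbreviation "T \<equiv> teq scale"
abbreviation "T1 \<equiv> lin_ext t1"
abbreviation "R \<equiv> tinv scale (lin_ext t1)"
abbreviation "E \<equiv> eps_id scale \<epsilon>"

lemma ismD: "is_mult scale (\<Delta> a)" using hom by (simp add: alg_hom_mult_def)
lemma tlD: "tlinear scale (fst (\<Delta> a))" using ismD by (simp add: is_mult_def)

lemma Dmul: "T (fst (\<Delta> (a*b)) v) (fst (\<Delta> a) (fst (\<Delta> b) v))"
  using hom by (simp add: alg_hom_mult_def meq_def mmul_def)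
lemma Dsc: "T (fst (\<Delta> (scale c a)) v) (tscale scale c (fst (\<Delta> a) v))"
  using hom by (simp add: alg_hom_mult_def meq_def mscale_def)

lemma G1: "T (tmul (t1 a b) v) (fst (\<Delta> a) (map (\<lambda>(p,q). (p, b*q)) v))"
  using galois by (simp add: galois_maps_def meq_def memb_def mmul_def one_ten_def)
lemma G2: "T (tmul (t2 a b) v) (map (\<lambda>(p,q). (a*p, q)) (fst (\<Delta> b) v))"
  using galois by (simp add: galois_maps_def meq_def memb_def mmul_def ten_one_def)

lemma FD: "T u u' \<Longrightarrow> T (fst (\<Delta> a) u) (fst (\<Delta> a) u')" by (rule tlin_teq[OF tlD])
lemma FDapp: "T (fst (\<Delta> a) (u @ v)) (fst (\<Delta> a) u @ fst (\<Delta> a) v)" by (rule tlin_app[OF tlD])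
lemma FDnil: "T (fst (\<Delta> a) []) []" by (rule tlin_nil[OF tlD])
lemma Dcomm: "T (fst (\<Delta> a) (tmul u v)) (tmul (fst (\<Delta> a) u) v)"
  by (rule mult_comm[OF nondeg ismD])

lemma ndr: "(\<And>v. T (tmul t v) (tmul t' v)) \<Longrightarrow> T t t'" by (rule nd_r[OF nondeg])

lemma L1: "T (fst (\<Delta> a) (t1 b y)) (t1 (a*b) y)"
proof (rule ndr)
  fix v
  have "T (tmul (fst (\<Delta> a) (t1 b y)) v) (fst (\<Delta> a) (tmul (t1 b y) v))" by (rule teq_sym, rule Dcomm)
  also have "T \<dots> (fst (\<Delta> a) (fst (\<Delta> b) (map (\<lambda>(p,q). (p, y*q)) v)))" by (rule FD, rule G1)
  also have "T \<dots> (fst (\<Delta> (a*b)) (map (\<lambda>(p,q). (p, y*q)) v))" by (rule teq_sym, rule Dmul)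
  also have "T \<dots> (tmul (t1 (a*b) y) v)" by (rule teq_sym, rule G1)
  finally show "T (tmul (fst (\<Delta> a) (t1 b y)) v) (tmul (t1 (a*b) y) v)" .
qed

lemma tmul_mapr1: "tmul (map (\<lambda>(r,s). (r*x, s)) t) v = tmul t (map (\<lambda>(c,d). (x*c, d)) v)"
proof (induct t)
  case (Cons p t)
  obtain a b where p: "p = (a,b)" by force
  have "map (\<lambda>(c,d). (a*x*c, b*d)) v = map (\<lambda>(c,d). (a*c, b*d)) (map (\<lambda>(c,d). (x*c, d)) v)"
    by (induct v) (auto simp: mult.assoc)
  then show ?case using Cons by (simp add: p tmul_cons)
qed simp

lemma tmul_mapr2: "tmul (map (\<lambda>(r,s). (r, s*y)) t) v = tmul t (map (\<lambda>(c,d). (c, y*d)) v)"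
proof (induct t)
  case (Cons p t)
  obtain a b where p: "p = (a,b)" by force
  have "map (\<lambda>(c,d). (a*c, b*y*d)) v = map (\<lambda>(c,d). (a*c, b*d)) (map (\<lambda>(c,d). (c, y*d)) v)"
    by (induct v) (auto simp: mult.assoc)
  then show ?case using Cons by (simp add: p tmul_cons)
qed simp

lemma tmul_mapl: "tmul (map (\<lambda>(r,s). (p*r, s)) t) v = map (\<lambda>(r,s). (p*r, s)) (tmul t v)"
proof (induct t)
  case (Cons q t)
  obtain a b where q: "q = (a,b)" by force
  have "map (\<lambda>(c,d). (p*a*c, b*d)) v = map (\<lambda>(r,s). (p*r, s)) (map (\<lambda>(c,d). (a*c, b*d)) v)"
    by (induct v) (auto simp: mult.assoc)
  then show ?case using Cons by (simp add: q tmul_cons)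
qed simp

lemma L2: "T (fst (\<Delta> a) [(x,y)]) (map (\<lambda>(r,s). (r*x, s)) (t1 a y))"
proof (rule ndr)
  fix v
  have "T (tmul (fst (\<Delta> a) [(x,y)]) v) (fst (\<Delta> a) (tmul [(x,y)] v))" by (rule teq_sym, rule Dcomm)
  also have "tmul [(x,y)] v = map (\<lambda>(p,q). (p, y*q)) (map (\<lambda>(c,d). (x*c, d)) v)"
    by (simp add: tmul_def comp_def case_prod_beta)
  also have "T (fst (\<Delta> a) \<dots>) (tmul (t1 a y) (map (\<lambda>(c,d). (x*c, d)) v))" by (rule teq_sym, rule G1)
  also have "tmul (t1 a y) (map (\<lambda>(c,d). (x*c, d)) v) = tmul (map (\<lambda>(r,s). (r*x, s)) (t1 a y)) v"
    by (rule tmul_mapr1[symmetric])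
  finally show "T (tmul (fst (\<Delta> a) [(x,y)]) v) (tmul (map (\<lambda>(r,s). (r*x, s)) (t1 a y)) v)" .
qed


lemma tmul_tscale: "tmul (tscale scale c t) v = tscale scale c (tmul t v)"
  by (induct t) (auto simp: tscale_def tmul_cons sc_ml comp_def case_prod_beta)

lemma tscale_append: "tscale scale c (t @ u) = tscale scale c t @ tscale scale c u"
  by (simp add: tscale_def)

lemma L1S: "T (t1 (scale c a) b) (tscale scale c (t1 a b))"
proof (rule ndr)
  fix v
  have "T (tmul (t1 (scale c a) b) v) (fst (\<Delta> (scale c a)) (map (\<lambda>(p,q). (p, b*q)) v))" by (rule G1)
  also have "T \<dots> (tscale scale c (fst (\<Delta> a) (map (\<lambda>(p,q). (p, b*q)) v)))" by (rule Dsc)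
  also have "T \<dots> (tscale scale c (tmul (t1 a b) v))" by (rule teq_tscale, rule teq_sym, rule G1)
  also have "\<dots> = tmul (tscale scale c (t1 a b)) v" by (simp add: tmul_tscale)
  finally show "T (tmul (t1 (scale c a) b) v) (tmul (tscale scale c (t1 a b)) v)" .
qed

lemma L3: "T (map (\<lambda>(r,s). (r, s*y)) (t2 p b)) (map (\<lambda>(r,s). (p*r, s)) (t1 b y))"
proof (rule ndr)
  fix v
  have "tmul (map (\<lambda>(r,s). (r, s*y)) (t2 p b)) v = tmul (t2 p b) (map (\<lambda>(c,d). (c, y*d)) v)"
    by (rule tmul_mapr2)
  also have "T \<dots> (map (\<lambda>(r,s). (p*r, s)) (fst (\<Delta> b) (map (\<lambda>(c,d). (c, y*d)) v)))" by (rule G2)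
  also have "T \<dots> (map (\<lambda>(r,s). (p*r, s)) (tmul (t1 b y) v))" by (rule teq_mapl, rule teq_sym, rule G1)
  also have "\<dots> = tmul (map (\<lambda>(r,s). (p*r, s)) (t1 b y)) v" by (rule tmul_mapl[symmetric])
  finally show "T (tmul (map (\<lambda>(r,s). (r, s*y)) (t2 p b)) v) (tmul (map (\<lambda>(r,s). (p*r, s)) (t1 b y)) v)" .
qed

lemma T1_cons[simp]: "T1 ((a,y)#t) = t1 a y @ T1 t" by (simp add: lin_ext_def)
lemma T1_nil[simp]: "T1 [] = []" by (simp add: lin_ext_def)
lemma T1_append[simp]: "T1 (t @ u) = T1 t @ T1 u" by (simp add: lin_ext_def)
lemma T1_concat: "T1 (concat L) = concat (map T1 L)" by (induct L) auto

lemma surj_ind: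
  fixes G :: "'a ten \<Rightarrow> 'a"
  assumes resp: "\<And>u u'. T u u' \<Longrightarrow> G u = G u'" and app: "\<And>u v. G (u @ v) = G u + G v"
    and nil: "G [] = 0" and gen: "\<And>a y. G (t1 a y) = 0"
  shows "G w = 0"
proof -
  obtain t where t: "T (T1 t) w" using bij1 unfolding tbij_def by blast
  have "G (T1 t) = 0" by (induct t) (auto simp: app nil gen)
  then show ?thesis using resp[OF t] by simp
qed

lemma E_resp: "T u u' \<Longrightarrow> E u = E u'" by (rule eps_id_teq[OF eps_lin])

lemma Phi: "E (fst (\<Delta> a) w) = a * E w"
proof -
  have "E (fst (\<Delta> a) w) - a * E w = 0"
  proof (rule surj_ind[where G="\<lambda>w. E (fst (\<Delta> a) w) - a * E w"])
    fix u u' assume "T u u'" then show "E (fst (\<Delta> a) u) - a * E u = E (fst (\<Delta> a) u') - a * E u'"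
      using E_resp[OF FD[OF \<open>T u u'\<close>]] E_resp[OF \<open>T u u'\<close>] by simp
  next
    fix u v show "E (fst (\<Delta> a) (u @ v)) - a * E (u @ v) = E (fst (\<Delta> a) u) - a * E u + (E (fst (\<Delta> a) v) - a * E v)"
      using E_resp[OF FDapp[of a u v]] by (simp add: distrib_left)
  next
    show "E (fst (\<Delta> a) []) - a * E [] = 0" using E_resp[OF FDnil[of a]] by simp
  next
    fix b y show "E (fst (\<Delta> a) (t1 b y)) - a * E (t1 b y) = 0"
      using E_resp[OF L1[of a b y]] counit1 by (simp add: mult.assoc)
  qed
  then show ?thesis by simp
qed

lemma EM: "scale (\<epsilon> (r*x)) s = scale (\<epsilon> r) (scale (\<epsilon> x) s)"
proof -
  have "E (map (\<lambda>(r,s). (r*x, s)) w) - scale (\<epsilon> x) (E w) = 0" for w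
  proof (rule surj_ind[where G="\<lambda>w. E (map (\<lambda>(r,s). (r*x, s)) w) - scale (\<epsilon> x) (E w)"])
    fix u u' assume "T u u'" then show "E (map (\<lambda>(r,s). (r*x, s)) u) - scale (\<epsilon> x) (E u) = E (map (\<lambda>(r,s). (r*x, s)) u') - scale (\<epsilon> x) (E u')"
      using E_resp[OF teq_mapr[OF \<open>T u u'\<close>]] E_resp[OF \<open>T u u'\<close>] by simp
  next
    fix u v show "E (map (\<lambda>(r,s). (r*x, s)) (u @ v)) - scale (\<epsilon> x) (E (u @ v)) = E (map (\<lambda>(r,s). (r*x, s)) u) - scale (\<epsilon> x) (E u) + (E (map (\<lambda>(r,s). (r*x, s)) v) - scale (\<epsilon> x) (E v))"
      by (simp add: vsc)
  next
    show "E (map (\<lambda>(r,s). (r*x, s)) []) - scale (\<epsilon> x) (E []) = 0" by (simp add: vsc)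
  next
    fix a y
    have "E (map (\<lambda>(r,s). (r*x, s)) (t1 a y)) = E (fst (\<Delta> a) [(x,y)])" using E_resp[OF L2] by simp
    also have "\<dots> = a * scale (\<epsilon> x) y" using Phi by (simp add: vsc)
    also have "\<dots> = scale (\<epsilon> x) (E (t1 a y))" using counit1 by (simp add: sc_mr)
    finally show "E (map (\<lambda>(r,s). (r*x, s)) (t1 a y)) - scale (\<epsilon> x) (E (t1 a y)) = 0" by simp
  qed
  from this[of "[(r,s)]"] show ?thesis by (simp add: vsc mult.commute)
qed

lemma E_mapl: "E (map (\<lambda>(r,s). (p*r, s)) t) = scale (\<epsilon> p) (E t)"
  by (induct t) (auto simp: EM vsc)

lemma cancel_r: "(\<And>d. u * d = w * d) \<Longrightarrow> u = (w::'a)"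
proof -
  assume h: "\<And>d. u * d = w * d"
  have "\<forall>b. (u - w) * b = 0" using h by (simp add: left_diff_distrib)
  then have "u - w = 0" using nondeg unfolding nondegenerate_def by blast
  then show ?thesis by simp
qed

lemma Et2: "E (t2 p b) = scale (\<epsilon> p) b"
proof (rule cancel_r)
  fix y
  have "E (t2 p b) * y = E (map (\<lambda>(r,s). (r, s*y)) (t2 p b))" by (rule eps_id_mr)
  also have "\<dots> = E (map (\<lambda>(r,s). (p*r, s)) (t1 b y))" by (rule E_resp[OF L3])
  also have "\<dots> = scale (\<epsilon> p) (b * y)" using counit1 by (simp add: E_mapl)
  also have "\<dots> = scale (\<epsilon> p) b * y" by (rule sc_ml)
  finally show "E (t2 p b) * y = scale (\<epsilon> p) b * y" .
qed


lemma R1: "T (T1 (R u)) u"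
proof -
  have "\<exists>t. T (T1 t) u" using bij1 unfolding tbij_def by blast
  then show ?thesis unfolding tinv_def by (rule someI_ex)
qed

lemma R2: "T (T1 t) (T1 t') \<Longrightarrow> T t t'" using bij1 unfolding tbij_def by blast

lemma R3: "T u u' \<Longrightarrow> T (R u) (R u')"
proof (rule R2)
  assume h: "T u u'"
  have "T (T1 (R u)) u" by (rule R1)
  also have "T u u'" by (rule h)
  also have "T u' (T1 (R u'))" by (rule teq_sym, rule R1)
  finally show "T (T1 (R u)) (T1 (R u'))" .
qed

lemma R4: "T (R (u @ v)) (R u @ R v)"
proof (rule R2)
  have "T (T1 (R (u @ v))) (u @ v)" by (rule R1)
  also have "T (u @ v) (T1 (R u) @ T1 (R v))" by (rule teq_append; rule teq_sym, rule R1)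
  also have "\<dots> = T1 (R u @ R v)" by simp
  finally show "T (T1 (R (u @ v))) (T1 (R u @ R v))" .
qed

lemma tscale_cons[simp]: "tscale scale c ((a,b)#t) = (scale c a, b) # tscale scale c t"
  by (simp add: tscale_def)
lemma tscale_nil[simp]: "tscale scale c [] = []"
  by (simp add: tscale_def)

lemma T1S: "T (T1 (tscale scale c t)) (tscale scale c (T1 t))"
proof (induct t)
  case (Cons p t)
  obtain a b where p: "p = (a,b)" by force
  have "T (t1 (scale c a) b @ T1 (tscale scale c t)) (tscale scale c (t1 a b) @ tscale scale c (T1 t))"
    by (rule teq_append[OF L1S Cons])
  then show ?case by (simp add: p tscale_append)
qed simp

lemma R5: "T (R (tscale scale c u)) (tscale scale c (R u))"
proof (rule R2)
  have "T (T1 (R (tscale scale c u))) (tscale scale c u)" by (rule R1)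
  also have "T \<dots> (tscale scale c (T1 (R u)))" by (rule teq_tscale, rule teq_sym, rule R1)
  also have "T \<dots> (T1 (tscale scale c (R u)))" by (rule teq_sym, rule T1S)
  finally show "T (T1 (R (tscale scale c u))) (T1 (tscale scale c (R u)))" .
qed

abbreviation "S y q \<equiv> E (R [(y,q)])"

lemma S_resp: "T [(y,q)] u \<Longrightarrow> S y q = E (R u)"
  by (rule E_resp, rule R3)

lemma S_app: "E (R (u @ v)) = E (R u) + E (R v)"
  using E_resp[OF R4[of u v]] by simp

lemma S_add1: "S (y + y') q = S y q + S y' q"
proof -
  have "T [(y + y', q)] ([(y,q)] @ [(y',q)])"
    unfolding teq_pr by (auto simp: lin_fun_add distrib_right)
  then show ?thesis using S_resp S_app by metis
qed

lemma S_add2: "S y (q + q') = S y q + S y q'"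
proof -
  have "T [(y, q + q')] ([(y,q)] @ [(y,q')])"
    unfolding teq_pr by (auto simp: lin_fun_add distrib_left)
  then show ?thesis using S_resp S_app by metis
qed

lemma S_sc1: "S (scale c y) q = scale c (S y q)"
proof -
  have "S (scale c y) q = E (R (tscale scale c [(y,q)]))" by simp
  also have "\<dots> = E (tscale scale c (R [(y,q)]))" by (rule E_resp, rule R5)
  also have "\<dots> = scale c (S y q)" by (rule eps_id_tscale[OF eps_lin])
  finally show ?thesis .
qed

lemma S_sc2: "S y (scale c q) = scale c (S y q)"
proof -
  have "T [(y, scale c q)] [(scale c y, q)]"
    unfolding teq_pr by (auto simp: lin_fun_scale)
  then have "S y (scale c q) = S (scale c y) q" using S_resp by metis
  then show ?thesis using S_sc1 by simp
qed

lemma S_01: "S 0 q = 0" using S_sc1[of 0 0 q] by (simp add: vsc)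
lemma S_02: "S y 0 = 0" using S_sc2[of y 0 0] by (simp add: vsc)

lemma Sum1: "sum_list (map (\<lambda>(x,y). scale (\<epsilon> x) (S y q)) L) = S (E L) q"
  by (induct L) (auto simp: S_01 S_add1 S_sc1)

lemma Sum2: "sum_list (map (\<lambda>(p,q). scale (\<epsilon> p) (S b q)) L) = S b (E L)"
  by (induct L) (auto simp: S_02 S_add2 S_sc2)

lemma T1M: "T (T1 (map (\<lambda>(r,s). (p*r, s)) u)) (fst (\<Delta> p) (T1 u))"
proof (induct u)
  case Nil then show ?case using FDnil by (simp add: teq_sym)
next
  case (Cons z u)
  obtain x y where z: "z = (x,y)" by force
  have "T (t1 (p*x) y @ T1 (map (\<lambda>(r,s). (p*r, s)) u)) (fst (\<Delta> p) (t1 x y) @ fst (\<Delta> p) (T1 u))"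
    by (rule teq_append[OF teq_sym[OF L1] Cons])
  also have "T \<dots> (fst (\<Delta> p) (t1 x y @ T1 u))" by (rule teq_sym, rule FDapp)
  finally show ?case by (simp add: z)
qed

lemma C1: "T (R [(a*b, c)]) (concat (map (\<lambda>(p,q). map (\<lambda>(r,s). (p*r, s)) (R [(b,q)])) (R [(a,c)])))"
proof (rule R2)
  have "T (T1 (concat (map (\<lambda>(p,q). map (\<lambda>(r,s). (p*r, s)) (R [(b,q)])) (R [(a,c)]))))
     (concat (map (\<lambda>(p,q). map (\<lambda>(r,s). (r*b, s)) (t1 p q)) (R [(a,c)])))"
    unfolding T1_concat map_map
  proof (rule teq_concat_map)
    fix z assume "z \<in> set (R [(a,c)])"
    obtain p q where z: "z = (p,q)" by force
    have "T (T1 (map (\<lambda>(r,s). (p*r, s)) (R [(b,q)]))) (fst (\<Delta> p) (T1 (R [(b,q)])))" by (rule T1M)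
    also have "T \<dots> (fst (\<Delta> p) [(b,q)])" by (rule FD, rule R1)
    also have "T \<dots> (map (\<lambda>(r,s). (r*b, s)) (t1 p q))" by (rule L2)
    finally show "T ((T1 \<circ> (\<lambda>(p,q). map (\<lambda>(r,s). (p*r, s)) (R [(b,q)]))) z) ((\<lambda>(p,q). map (\<lambda>(r,s). (r*b, s)) (t1 p q)) z)"
      by (simp add: z)
  qed
  also have "concat (map (\<lambda>(p,q). map (\<lambda>(r,s). (r*b, s)) (t1 p q)) (R [(a,c)])) = map (\<lambda>(r,s). (r*b, s)) (T1 (R [(a,c)]))"
    by (simp add: lin_ext_def map_concat comp_def split_def)
  also have "T \<dots> (map (\<lambda>(r,s). (r*b, s)) [(a,c)])" by (rule teq_mapr, rule R1)
  also have "T \<dots> (T1 (R [(a*b, c)]))" by (simp add: teq_sym[OF R1])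
  finally show "T (T1 (R [(a*b, c)])) (T1 (concat (map (\<lambda>(p,q). map (\<lambda>(r,s). (p*r, s)) (R [(b,q)])) (R [(a,c)]))))"
    by (rule teq_sym)
qed

lemma E_ie: "E (id_eps_id scale \<epsilon> (map (Pair x) U)) = scale (\<epsilon> x) (E U)"
  by (induct U) (auto simp: id_eps_id_def lin_fun_scale[OF eps_lin] vsc mult.commute)

lemma LCcomp: "E (id_eps_id scale \<epsilon> (id_ten R (map (\<lambda>(x,y). (x,y,q)) L))) = sum_list (map (\<lambda>(x,y). scale (\<epsilon> x) (S y q)) L)"
proof (induct L)
  case Nil then show ?case by (simp add: id_ten_def id_eps_id_def)
next
  case (Cons z L)
  obtain x y where z: "z = (x,y)" by force
  have "id_ten R (map (\<lambda>(x,y). (x,y,q)) (z # L)) = map (\<lambda>(p',q'). (x,p',q')) (R [(y,q)]) @ id_ten R (map (\<lambda>(x,y). (x,y,q)) L)"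
    by (simp add: z id_ten_def)
  moreover have "id_eps_id scale \<epsilon> (u @ v) = id_eps_id scale \<epsilon> u @ id_eps_id scale \<epsilon> v" for u v
    by (simp add: id_eps_id_def)
  ultimately show ?case using Cons by (simp add: z E_ie)
qed

lemma main: "S (a*b) c = S b (S a c)"
proof -
  have "S (a*b) c = E (concat (map (\<lambda>(p,q). map (\<lambda>(r,s). (p*r, s)) (R [(b,q)])) (R [(a,c)])))"
    by (rule E_resp, rule C1)
  also have "\<dots> = sum_list (map (\<lambda>(p,q). E (map (\<lambda>(r,s). (p*r, s)) (R [(b,q)]))) (R [(a,c)]))"
    by (simp add: eps_id_concat comp_def split_def)
  also have "\<dots> = sum_list (map (\<lambda>(p,q). scale (\<epsilon> p) (S b q)) (R [(a,c)]))"
  proof (rule arg_cong[where f=sum_list], rule map_cong[OF refl])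
    fix z assume "z \<in> set (R [(a,c)])"
    obtain p q where z: "z = (p,q)" by force
    have "E (map (\<lambda>(r,s). (p*r, s)) (R [(b,q)])) = E (id_eps_id scale \<epsilon> (id_ten R (map (\<lambda>(x,y). (x,y,q)) (t2 p b))))"
      using lcol unfolding left_colinear_def by (intro E_resp) blast
    also have "\<dots> = S (E (t2 p b)) q" by (simp add: LCcomp Sum1)
    also have "\<dots> = scale (\<epsilon> p) (S b q)" by (simp add: Et2 S_sc1)
    finally show "(\<lambda>(p,q). E (map (\<lambda>(r,s). (p*r, s)) (R [(b,q)]))) z = (\<lambda>(p,q). scale (\<epsilon> p) (S b q)) z"
      by (simp add: z)
  qed
  also have "\<dots> = S b (S a c)" by (rule Sum2)
  finally show ?thesis .
qed

end


theorem lemma3p2: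
  fixes scale :: "'k::field \<Rightarrow> 'a::ring \<Rightarrow> 'a"
    and \<Delta> :: "'a \<Rightarrow> 'a mult"
    and \<epsilon> :: "'a \<Rightarrow> 'k"
    and t1 t2 :: "'a \<Rightarrow> 'a \<Rightarrow> 'a ten"
  assumes alg: "k_algebra scale"
    and nondeg: "nondegenerate TYPE('a)"
    and hom: "alg_hom_mult scale \<Delta>"
    and galois: "galois_maps scale \<Delta> t1 t2"
    and eps_lin: "lin_fun scale \<epsilon>"
    and counit1: "\<forall>a b. eps_id scale \<epsilon> (t1 a b) = a * b"
    and counit2: "\<forall>a b. id_eps scale \<epsilon> (t2 a b) = a * b"
    and bij1: "tbij scale (lin_ext t1)"
    and bij2: "tbij scale (lin_ext t2)"
    and lcol: "left_colinear scale \<epsilon> t1 t2"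
    and rcol: "right_colinear scale \<epsilon> t1 t2"
  shows "\<forall>a b c. antipode scale \<epsilon> t1 (a * b) c = antipode scale \<epsilon> t1 b (antipode scale \<epsilon> t1 a c)"
proof -
  interpret setting scale \<Delta> \<epsilon> t1 t2
    by (unfold_locales; fact assms)
  show ?thesis unfolding antipode_def using main by blast
qed

end
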